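(* Let $n\ge 2$ and let the billiard domain $\mathcal{B}\subset\mathbb{R}^n$ be the region between two parallel affine hyperplanes. Then every trajectory of the no-slip billiard in $\mathcal{B}$ whose initial center-of-mass velocity is not parallel to the hyperplanes is bounded (the position of the particle's center of mass remains in a bounded set). Trajectories remain bounded if a constant force is applied to the particle's center of mass along any direction parallel to the hyperplanes.
   Context: The moving particle is a ball of radius $r>0$ with a rotationally symmetric mass distribution of total mass $m$ whose second-moment matrix per unit mass is $\lambda I$, $\lambda=(r\gamma)^2/2$, $\gamma>0$. Put $c=\frac{1-\gamma^2}{1+\gamma^2}$, $s=\frac{2\gamma}{1+\gamma^2}$, and for $a,b\in\mathbb{R}^n$ let $a\wedge b\in\mathfrak{so}(n)$ be $(a\wedge b)x=(a\cdot x)b-(b\cdot x)a$. The billiard domain $\mathcal{B}$ is the set of admissible positions of the particle's center; at a boundary point $a$, $\nu_a$ is the unit normal pointing into $\mathcal{B}$. A state is $(a,u,U)$ with $u$ the center-of-mass velocity and $U\in\mathfrak{so}(n)$ the angular velocity matrix (a material point at $x$ has velocity $U(x-a)+u$). A no-slip billiard trajectory: between collisions $U$ is constant and the center of mass moves freely (or with constant acceleration $F/m$ under a constant force $F$); at a collision at $a$ the pre-collision $(u,U)$ is replaced by $C_a(u,U)=\big(cu-\tfrac{s}{\gamma}(u\cdot\nu_a)\nu_a+s\gamma rU\nu_a,\ \tfrac{s}{\gamma r}\nu_a\wedge u+U-\tfrac{s}{\gamma}\nu_a\wedge U\nu_a\big)$. *)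

theory Defs
  imports "HOL-Analysis.Analysis"
begin

text \<open>Wedge product: (a \<and> b) x = (a . x) b - (b . x) a, as an n x n matrix.\<close>
definition wedge :: "real^'n \<Rightarrow> real^'n \<Rightarrow> real^'n^'n" where
  "wedge a b = (\<chi> i j. b$i * a$j - a$i * b$j)"

definition nsc :: "real \<Rightarrow> real" where "nsc \<gamma> = (1 - \<gamma>^2) / (1 + \<gamma>^2)"
definition nss :: "real \<Rightarrow> real" where "nss \<gamma> = (2 * \<gamma>) / (1 + \<gamma>^2)"

definition collision ::
  "real \<Rightarrow> real \<Rightarrow> real^'n \<Rightarrow> (real^'n) \<times> (real^'n^'n) \<Rightarrow> (real^'n) \<times> (real^'n^'n)" where
  "collision \<gamma> r \<nu> uU = (let u = fst uU; U = snd uU in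
     (nsc \<gamma> *\<^sub>R u - (nss \<gamma> / \<gamma> * (u \<bullet> \<nu>)) *\<^sub>R \<nu> + (nss \<gamma> * \<gamma> * r) *\<^sub>R (U *v \<nu>),
      (nss \<gamma> / (\<gamma> * r)) *\<^sub>R wedge \<nu> u + U - (nss \<gamma> / \<gamma>) *\<^sub>R wedge \<nu> (U *v \<nu>)))"

definition slab :: "real^'n \<Rightarrow> real \<Rightarrow> real \<Rightarrow> (real^'n) set" where
  "slab e \<alpha> \<beta> = {x. \<alpha> \<le> x \<bullet> e \<and> x \<bullet> e \<le> \<beta>}"

definition slab_normal :: "real^'n \<Rightarrow> real \<Rightarrow> real \<Rightarrow> real^'n \<Rightarrow> real^'n" where
  "slab_normal e \<alpha> \<beta> a = (if a \<bullet> e = \<alpha> then e else - e)"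

definition flight :: "real \<Rightarrow> real^'n \<Rightarrow> real^'n \<Rightarrow> real^'n \<Rightarrow> real \<Rightarrow> real^'n" where
  "flight m F a u \<tau> = a + \<tau> *\<^sub>R u + (\<tau>^2 / (2 * m)) *\<^sub>R F"

text \<open>A no-slip billiard trajectory in the slab: collision times t (t 0 = 0 is the initial
  time), states (a k, u k, U k) right after the k-th collision (k = 0: initial state).\<close>
definition noslip_traj ::
  "real \<Rightarrow> real^'n \<Rightarrow> real \<Rightarrow> real \<Rightarrow> real^'n \<Rightarrow> real \<Rightarrow> real \<Rightarrow>
   (nat \<Rightarrow> real) \<Rightarrow> (nat \<Rightarrow> real^'n) \<Rightarrow> (nat \<Rightarrow> real^'n) \<Rightarrow> (nat \<Rightarrow> real^'n^'n) \<Rightarrow> bool" where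
  "noslip_traj m F \<gamma> r e \<alpha> \<beta> t a u U \<longleftrightarrow>
     t 0 = 0 \<and> (\<forall>k. t k < t (Suc k)) \<and>
     a 0 \<in> slab e \<alpha> \<beta> \<and> transpose (U 0) = - U 0 \<and>
     (\<forall>k. \<forall>\<tau>. 0 \<le> \<tau> \<and> \<tau> \<le> t (Suc k) - t k \<longrightarrow> flight m F (a k) (u k) \<tau> \<in> slab e \<alpha> \<beta>) \<and>
     (\<forall>k. a (Suc k) = flight m F (a k) (u k) (t (Suc k) - t k) \<and>
          (a (Suc k) \<bullet> e = \<alpha> \<or> a (Suc k) \<bullet> e = \<beta>) \<and>
          (u (Suc k), U (Suc k)) =
            collision \<gamma> r (slab_normal e \<alpha> \<beta> (a (Suc k)))
              (u k + ((t (Suc k) - t k) / m) *\<^sub>R F, U k))"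

end

theory Submission imports Defs begin

lemma wedge_mv: "wedge a b *v x = (a \<bullet> x) *\<^sub>R b - (b \<bullet> x) *\<^sub>R a"
  by (simp add: vec_eq_iff matrix_vector_mult_def wedge_def inner_vec_def
      sum_distrib_left sum_distrib_right sum_subtractf algebra_simps)

lemma mv_add: "((A::real^'n^'m) + B) *v x = A *v x + B *v x"
  by (simp add: vec_eq_iff matrix_vector_mult_def sum.distrib algebra_simps)
lemma mv_diff: "((A::real^'n^'m) - B) *v x = A *v x - B *v x"
  by (simp add: vec_eq_iff matrix_vector_mult_def sum_subtractf algebra_simps)
lemma mv_scale: "((c::real) *\<^sub>R (A::real^'n^'m)) *v x = c *\<^sub>R (A *v x)"
  by (simp add: vec_eq_iff matrix_vector_mult_def sum_distrib_left algebra_simps)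

lemma coll_fst: "fst (collision g r \<nu> (u,V)) = nsc g *\<^sub>R u - (nss g / g * (u \<bullet> \<nu>)) *\<^sub>R \<nu> + (nss g * g * r) *\<^sub>R (V *v \<nu>)"
  by (simp add: collision_def)

lemma coll_snd: "snd (collision g r \<nu> (u,V)) *v x = (nss g/(g*r)) *\<^sub>R ((\<nu>\<bullet>x) *\<^sub>R u - (u\<bullet>x) *\<^sub>R \<nu>) + V *v x
   - (nss g/g) *\<^sub>R ((\<nu>\<bullet>x) *\<^sub>R (V*v \<nu>) - ((V *v \<nu>)\<bullet>x) *\<^sub>R \<nu>)"
  by (simp add: collision_def mv_add mv_diff mv_scale wedge_mv)

lemma skew_quad: assumes "transpose A = - (A::real^'n^'n)" shows "(A *v x) \<bullet> x = 0"
proof -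
  have "(A *v x) \<bullet> x = x \<bullet> (A *v x)" by (simp add: inner_commute)
  also have "\<dots> = (x v* A) \<bullet> x" by (simp add: dot_lmul_matrix)
  also have "x v* A = transpose A *v x" by simp
  also have "\<dots> = - (A *v x)" using assms by (simp add: vec_eq_iff matrix_vector_mult_def sum_negf)
  finally show ?thesis by simp
qed


lemma cs_rel: assumes "g > 0" shows "nsc g = nss g / g - 1" "nss g * g + nss g / g = 2"
proof -
  have h: "1 + g^2 > 0" by (simp add: add_pos_nonneg)
  have p: "nss g / g = 2 / (1 + g^2)" using assms h unfolding nss_def by (simp add: divide_simps)
  show "nsc g = nss g / g - 1" unfolding p nsc_def using h by (simp add: field_simps)
  have q: "nss g * g = 2 * g^2 / (1 + g^2)" unfolding nss_def by (simp add: power2_eq_square)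
  have "2 * g^2 / (1 + g^2) + 2 / (1 + g^2) = (2 * g^2 + 2) / (1 + g^2)" by (simp add: add_divide_distrib)
  also have "\<dots> = 2" using h by (simp add: divide_simps)
  finally show "nss g * g + nss g / g = 2" using p q by simp
qed

lemma phi_real:
  fixes x y z n W d r T m c p q :: real
  assumes "r > 0" "m > 0" "c = p - 1" "q + p = 2"
  shows "x + T*y + T^2/(2*m)*z + (T/2)*(c*(y + T/m*z) - (p*d)*n + (q*r)*W) + T^2/(4*m)*z
     - (T*r/2)*((p/r)*((y + T/m*z) - d*n) + W - p*W)
     = x + (T/2)*y + T^2/(4*m)*z + (T*r/2)*W"
proof -
  have q: "q = 2 - p" using assms by simp
  show ?thesis using assms unfolding q assms(3) by (simp add: field_simps power2_eq_square)
qed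

lemma phi_real2:
  fixes y z n W d r T m c s g :: real
  assumes r: "r > 0" and m: "m > 0" and g: "g > 0" and c: "c = s/g - 1" and q: "s*g + s/g = 2"
  shows "3 * (z * T\<^sup>2) / (4 * m) + (T * y + (T * (c * (y + T * z / m) - s * d * n / g + s * g * r * W) / 2 -
       T * r * (s * (y + T * z / m - d * n) / (g * r) + W - s * W / g) / 2)) =
    T * y / 2 + (T\<^sup>2 * z / (4 * m) + T * r * W / 2)"
proof -
  define p where "p = s / g"
  have q': "s*g = 2 - p" using q p_def by simp
  have e1: "s * d * n / g = p * d * n" "s * W / g = p * W" "s * g * r * W = (2 - p) * r * W"
    "s * (y + T * z / m - d * n) / (g * r) = p * (y + T * z / m - d * n) / r"
    using q' by (simp_all add: p_def)
  have c': "c = p - 1" using c p_def by simp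
  show ?thesis unfolding e1 c' using r m by (simp add: field_simps power2_eq_square)
qed

lemma phi_step:
  fixes a u F \<nu> :: "real^'n" and g r T m :: real
  assumes g: "g > 0" and r: "r > 0" and m: "m > 0" and nn: "\<nu> \<bullet> \<nu> = 1" and wn: "(V *v \<nu>) \<bullet> \<nu> = 0"
  defines "ut \<equiv> u + (T / m) *\<^sub>R F"
  shows "flight m F a u T + (T/2) *\<^sub>R fst (collision g r \<nu> (ut, V)) + (T^2/(4*m)) *\<^sub>R F
          - (T*r/2) *\<^sub>R (snd (collision g r \<nu> (ut, V)) *v \<nu>)
       = a + (T/2) *\<^sub>R u + (T^2/(4*m)) *\<^sub>R F + (T*r/2) *\<^sub>R (V *v \<nu>)"
proof (rule vec_eq_iff[THEN iffD2], rule allI)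
  fix i
  define d where "d = ut \<bullet> \<nu>"
  have e: "nss g/(g*r) = (nss g/g)/r" by simp
  have "nss g * g * r = (nss g * g) * r" by simp
  note P = phi_real[OF r m cs_rel(1)[OF g] cs_rel(2)[OF g], where x="a$i" and y="u$i" and z="F$i"
     and n="\<nu>$i" and W="(V *v \<nu>)$i" and d=d and T=T]
  show "(flight m F a u T + (T/2) *\<^sub>R fst (collision g r \<nu> (ut, V)) + (T^2/(4*m)) *\<^sub>R F
          - (T*r/2) *\<^sub>R (snd (collision g r \<nu> (ut, V)) *v \<nu>)) $ i
       = (a + (T/2) *\<^sub>R u + (T^2/(4*m)) *\<^sub>R F + (T*r/2) *\<^sub>R (V *v \<nu>)) $ i"
    unfolding coll_fst coll_snd flight_def nn wn d_def[symmetric] e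
    by (simp add: ut_def phi_real2[OF r m g cs_rel(1)[OF g] cs_rel(2)[OF g]])
qed


lemma cs_sq: assumes "g > 0" shows "nsc g ^2 + nss g ^2 = 1"
proof -
  have h: "1 + g^2 > 0" by (simp add: add_pos_nonneg)
  have "nsc g ^2 + nss g ^2 = ((1 - g^2)^2 + (2*g)^2) / (1 + g^2)^2"
    unfolding nsc_def nss_def by (simp add: power_divide add_divide_distrib)
  also have "(1 - g^2)^2 + (2*g)^2 = (1 + g^2)^2" by (simp add: algebra_simps power2_eq_square)
  finally show ?thesis using h by simp
qed

lemma energy_real:
  fixes A d B C r c s g :: real
  assumes r: "r > 0" and g: "g > 0" and c: "c = s/g - 1" and cs: "c^2 + s^2 = 1"
  shows "c * (c * A - s * d * d / g + s * g * r * B) - s * d * (c * d - s * d / g) / g +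
     s * g * r * (c * B + s * g * r * C) +
     (g * r)\<^sup>2 * (s * (s * (A - d * d) / (g * r) + B - s * B / g) / (g * r) +
      (s * B / (g * r) + C - s * C / g) - s * (s * B / (g * r) + C - s * C / g) / g) =
     A + (g * r)\<^sup>2 * C"
proof -
  define p where "p = s / g"
  have s: "s = p * g" using g p_def by simp
  have c': "c = p - 1" using c p_def by simp
  have rel: "(p - 1)^2 + (p*g)^2 = 1" using cs unfolding s c' .
  show ?thesis unfolding s c' using r g rel
    apply (simp add: field_simps power2_eq_square)
    apply algebra
    done
qed

lemma coll_energy:
  fixes x \<nu> :: "real^'n" and g r :: real
  assumes g: "g > 0" and r: "r > 0" and nn: "\<nu> \<bullet> \<nu> = 1" and wn: "(V *v \<nu>) \<bullet> \<nu> = 0"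
  shows "fst (collision g r \<nu> (x, V)) \<bullet> fst (collision g r \<nu> (x, V))
     + (g*r)^2 * ((snd (collision g r \<nu> (x, V)) *v \<nu>) \<bullet> (snd (collision g r \<nu> (x, V)) *v \<nu>))
     = x \<bullet> x + (g*r)^2 * ((V *v \<nu>) \<bullet> (V *v \<nu>))"
proof -
  define w where "w = V *v \<nu>"
  have wn': "w \<bullet> \<nu> = 0" "\<nu> \<bullet> w = 0" using wn w_def by (simp_all add: inner_commute)
  show ?thesis
    unfolding coll_fst coll_snd nn w_def[symmetric]
    apply (simp add: inner_add_left inner_add_right inner_diff_left inner_diff_right wn' nn)
    apply (simp add: inner_commute[of \<nu> x] inner_commute[of w x])
    apply (rule energy_real[OF r g cs_rel(1)[OF g] cs_sq[OF g]])
    done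
qed


lemma mv_neg: "(A::real^'n^'m) *v (- x) = - (A *v x)"
  by (simp add: vec_eq_iff matrix_vector_mult_def sum_negf)

lemma flight_e: "F \<bullet> e = 0 \<Longrightarrow> flight m F a u \<tau> \<bullet> e = a \<bullet> e + \<tau> * (u \<bullet> e)"
  by (simp add: flight_def inner_add_left)

lemma flight_energy:
  fixes u F a :: "real^'n" assumes m: "m > 0"
  shows "(u + (T/m) *\<^sub>R F) \<bullet> (u + (T/m) *\<^sub>R F) - (2/m) * (F \<bullet> flight m F a u T) = u \<bullet> u - (2/m) * (F \<bullet> a)"
  using m by (simp add: flight_def inner_add_left inner_add_right inner_commute field_simps power2_eq_square)

lemma flight_norm:
  fixes u F a :: "real^'n" assumes m: "m > 0" and t: "0 \<le> \<tau>" "\<tau> \<le> d"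
  shows "norm (flight m F a u \<tau>) \<le> norm a + d * norm u + d^2/(2*m) * norm F"
proof -
  have "norm (flight m F a u \<tau>) \<le> norm a + norm (\<tau> *\<^sub>R u) + norm ((\<tau>^2/(2*m)) *\<^sub>R F)"
    unfolding flight_def by (meson norm_triangle_le norm_triangle_ineq order_refl add_mono)
  also have "norm (\<tau> *\<^sub>R u) \<le> d * norm u" using t by (simp add: mult_right_mono)
  also have "norm ((\<tau>^2/(2*m)) *\<^sub>R F) \<le> d^2/(2*m) * norm F"
  proof -
    have "\<tau>^2 \<le> d^2" using t by (simp add: power_mono)
    then have "\<tau>^2/(2*m) \<le> d^2/(2*m)" using m by (simp add: divide_right_mono)
    then have "\<tau>^2/(2*m) * norm F \<le> d^2/(2*m) * norm F" by (rule mult_right_mono) simp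
    then show ?thesis using m by simp
  qed
  finally show ?thesis by simp
qed

lemma quad_bound:
  fixes x z K A B :: real
  assumes "x \<ge> 0" "z \<ge> 0" "A \<ge> 0" "B \<ge> 0" "x^2 + z^2 \<le> K + A*x + B*z"
  shows "x \<le> 1 + \<bar>K\<bar> + A + B \<and> z \<le> 1 + \<bar>K\<bar> + A + B"
proof -
  define M where "M = max x z"
  have M0: "M \<ge> 0" and Mx: "x \<le> M" and Mz: "z \<le> M" using assms by (auto simp: M_def)
  have "M^2 \<le> x^2 + z^2" using assms unfolding M_def by (auto simp: max_def)
  also have "\<dots> \<le> K + A*x + B*z" by fact
  also have "\<dots> \<le> \<bar>K\<bar> + (A + B) * M"
  proof -
    have "A * x \<le> A * M" "B * z \<le> B * M" using assms Mx Mz by (simp_all add: mult_left_mono)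
    then show ?thesis by (simp add: algebra_simps)
  qed
  finally have q: "M^2 \<le> \<bar>K\<bar> + (A + B) * M" .
  have "M \<le> 1 + \<bar>K\<bar> + A + B"
  proof (cases "M \<le> 1")
    case False
    then have "\<bar>K\<bar> \<le> \<bar>K\<bar> * M" by (simp add: mult_le_cancel_left1)
    then have "M * M \<le> (\<bar>K\<bar> + A + B) * M" using q by (simp add: power2_eq_square algebra_simps)
    then have "M \<le> \<bar>K\<bar> + A + B" using False by simp
    then show ?thesis by simp
  qed (use assms in auto)
  then show ?thesis using Mx Mz by simp
qed


theorem theorem2p7:
  fixes m \<gamma> r \<alpha> \<beta> :: real and e F :: "real^'n"
    and t :: "nat \<Rightarrow> real" and a u :: "nat \<Rightarrow> real^'n" and U :: "nat \<Rightarrow> real^'n^'n"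
  assumes "CARD('n) \<ge> 2"
    and "m > 0" and "r > 0" and "\<gamma> > 0"
    and "norm e = 1" and "\<alpha> < \<beta>"
    and "F \<bullet> e = 0"
    and "noslip_traj m F \<gamma> r e \<alpha> \<beta> t a u U"
    and "u 0 \<bullet> e \<noteq> 0"
  shows "bounded {flight m F (a k) (u k) \<tau> | k \<tau>. 0 \<le> \<tau> \<and> \<tau> \<le> t (Suc k) - t k}"
proof -
  have mpos: "m > 0" and rpos: "r > 0" and gpos: "\<gamma> > 0" and ab: "\<alpha> < \<beta>" and Fe: "F \<bullet> e = 0"
    using assms by auto
  note N = assms(8)[unfolded noslip_traj_def]
  have t0: "t 0 = 0" and tinc: "\<And>k. t k < t (Suc k)" and sk: "transpose (U 0) = - U 0"
    using N by blast+
  have as: "\<And>k. a (Suc k) = flight m F (a k) (u k) (t (Suc k) - t k)"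
    and wall: "\<And>k. a (Suc k) \<bullet> e = \<alpha> \<or> a (Suc k) \<bullet> e = \<beta>"
    and col: "\<And>k. (u (Suc k), U (Suc k)) = collision \<gamma> r (slab_normal e \<alpha> \<beta> (a (Suc k)))
              (u k + ((t (Suc k) - t k) / m) *\<^sub>R F, U k)"
    using N by blast+
  have fl: "\<And>k \<tau>. 0 \<le> \<tau> \<Longrightarrow> \<tau> \<le> t (Suc k) - t k \<Longrightarrow> flight m F (a k) (u k) \<tau> \<in> slab e \<alpha> \<beta>"
    using N by blast
  define \<nu> where "\<nu> k = slab_normal e \<alpha> \<beta> (a k)" for k
  define D where "D k = t (Suc k) - t k" for k
  have uS: "u (Suc k) = fst (collision \<gamma> r (\<nu> (Suc k)) (u k + (D k / m) *\<^sub>R F, U k))" for k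
    using col[of k] unfolding \<nu>_def D_def by (metis fst_conv)
  have US: "U (Suc k) = snd (collision \<gamma> r (\<nu> (Suc k)) (u k + (D k / m) *\<^sub>R F, U k))" for k
    using col[of k] unfolding \<nu>_def D_def by (metis snd_conv)
  have ee: "e \<bullet> e = 1" using assms(5) by (simp add: norm_eq_1)
  have nu: "\<nu> k = e \<or> \<nu> k = -e" for k by (simp add: \<nu>_def slab_normal_def)
  have Ue: "(U k *v e) \<bullet> e = 0" for k
  proof (induction k)
    case 0 show ?case using skew_quad[OF sk] .
  next
    case (Suc k)
    show ?case unfolding US coll_snd using Suc nu[of "Suc k"] ee
      by (auto simp: inner_add_left inner_diff_left mv_neg algebra_simps inner_commute)
  qed
  have Unu: "(U k *v \<nu> j) \<bullet> \<nu> j = 0" for k j using Ue[of k] nu[of j] by (auto simp: mv_neg)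
  have nunu: "\<nu> j \<bullet> \<nu> j = 1" for j using nu[of j] ee by auto
  have ue: "u (Suc k) \<bullet> e = - (u k \<bullet> e)" for k
  proof -
    define ut where "ut = u k + (D k / m) *\<^sub>R F"
    have "u (Suc k) \<bullet> \<nu> (Suc k) = (nsc \<gamma> - nss \<gamma> / \<gamma>) * (ut \<bullet> \<nu> (Suc k))"
      unfolding uS ut_def[symmetric] coll_fst using Unu nunu
      by (simp add: inner_add_left inner_diff_left algebra_simps)
    then have "u (Suc k) \<bullet> \<nu> (Suc k) = - ((u k + (D k / m) *\<^sub>R F) \<bullet> \<nu> (Suc k))"
      using cs_rel(1)[OF gpos] unfolding ut_def by simp
    then show ?thesis using nu[of "Suc k"] Fe by (auto simp: inner_add_left)
  qed
  define v0 where "v0 = \<bar>u 0 \<bullet> e\<bar>"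
  have v0pos: "v0 > 0" using assms(9) v0_def by simp
  have uabs: "\<bar>u k \<bullet> e\<bar> = v0" for k
    by (induction k) (auto simp: v0_def ue)
  define T where "T = (\<beta> - \<alpha>) / v0"
  have Tpos: "T > 0" using ab v0pos T_def by simp
  have geo: "D (Suc k) = T \<and> \<nu> (Suc (Suc k)) = - \<nu> (Suc k)" for k
  proof -
    define j where "j = Suc k"
    have fe: "a (Suc j) \<bullet> e = a j \<bullet> e + D j * (u j \<bullet> e)"
      using as[of j] flight_e[OF Fe] by (simp add: D_def)
    have Dp: "D j > 0" using tinc[of j] by (simp add: D_def)
    have h: "\<bar>u j \<bullet> e\<bar> = v0" by (rule uabs)
    from wall[of k] have "a j \<bullet> e = \<alpha> \<or> a j \<bullet> e = \<beta>" by (simp add: j_def)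
    then show ?thesis
    proof
      assume A: "a j \<bullet> e = \<alpha>"
      have hp: "u j \<bullet> e > 0"
      proof (rule ccontr)
        assume "\<not> ?thesis"
        then have "u j \<bullet> e < 0" using h v0pos by auto
        then have "a (Suc j) \<bullet> e < \<alpha>" using fe A Dp by (simp add: mult_pos_neg)
        then show False using wall[of j] ab by auto
      qed
      then have "a (Suc j) \<bullet> e > \<alpha>" using fe A Dp by simp
      then have B: "a (Suc j) \<bullet> e = \<beta>" using wall[of j] by auto
      have "D j * v0 = \<beta> - \<alpha>" using fe A B h hp by simp
      then have "D j = T" using v0pos by (simp add: T_def field_simps)
      moreover have "\<nu> j = e" "\<nu> (Suc j) = - e" using A B ab by (auto simp: \<nu>_def slab_normal_def)
      ultimately show ?thesis by (simp add: j_def)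
    next
      assume A: "a j \<bullet> e = \<beta>"
      have hp: "u j \<bullet> e < 0"
      proof (rule ccontr)
        assume "\<not> ?thesis"
        then have "u j \<bullet> e > 0" using h v0pos by auto
        then have "a (Suc j) \<bullet> e > \<beta>" using fe A Dp by simp
        then show False using wall[of j] ab by auto
      qed
      then have "a (Suc j) \<bullet> e < \<beta>" using fe A Dp by (simp add: mult_pos_neg)
      then have B: "a (Suc j) \<bullet> e = \<alpha>" using wall[of j] by auto
      have vv: "v0 = - (u j \<bullet> e)" using h hp by simp
      have "D j * v0 = \<beta> - \<alpha>" using fe A B unfolding vv by (simp add: algebra_simps)
      then have "D j = T" using v0pos by (simp add: T_def field_simps)
      moreover have "\<nu> j = - e" "\<nu> (Suc j) = e" using A B ab by (auto simp: \<nu>_def slab_normal_def)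
      ultimately show ?thesis by (simp add: j_def)
    qed
  qed
  define W where "W j = U j *v \<nu> j" for j
  define \<Phi> where "\<Phi> j = a j + (T/2) *\<^sub>R u j + (T^2/(4*m)) *\<^sub>R F - (T*r/2) *\<^sub>R W j" for j
  define E where "E j = u j \<bullet> u j + (\<gamma>*r)^2 * (W j \<bullet> W j) - (2/m) * (F \<bullet> a j)" for j
  have stepdata: "a (Suc (Suc k)) = flight m F (a (Suc k)) (u (Suc k)) T \<and>
     u (Suc (Suc k)) = fst (collision \<gamma> r (\<nu> (Suc (Suc k))) (u (Suc k) + (T / m) *\<^sub>R F, U (Suc k))) \<and>
     W (Suc (Suc k)) = snd (collision \<gamma> r (\<nu> (Suc (Suc k))) (u (Suc k) + (T / m) *\<^sub>R F, U (Suc k))) *v \<nu> (Suc (Suc k)) \<and>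
     U (Suc k) *v \<nu> (Suc (Suc k)) = - W (Suc k)" for k
    using as[of "Suc k"] uS[of "Suc k"] US[of "Suc k"] geo[of k]
    by (simp add: D_def W_def mv_neg)
  have phi: "\<Phi> (Suc (Suc k)) = \<Phi> (Suc k)" for k
  proof -
    note P = phi_step[where \<nu>="\<nu> (Suc (Suc k))" and V="U (Suc k)" and a="a (Suc k)" and u="u (Suc k)"
      and F=F and T=T and g=\<gamma> and r=r and m=m, OF gpos rpos mpos nunu Unu]
    have s1: "a (Suc (Suc k)) = flight m F (a (Suc k)) (u (Suc k)) T" and
     s2: "u (Suc (Suc k)) = fst (collision \<gamma> r (\<nu> (Suc (Suc k))) (u (Suc k) + (T / m) *\<^sub>R F, U (Suc k)))" and
     s3: "W (Suc (Suc k)) = snd (collision \<gamma> r (\<nu> (Suc (Suc k))) (u (Suc k) + (T / m) *\<^sub>R F, U (Suc k))) *v \<nu> (Suc (Suc k))" and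
     s4: "U (Suc k) *v \<nu> (Suc (Suc k)) = - W (Suc k)" using stepdata[of k] by blast+
    note P' = P[folded s1 s2 s3, unfolded s4]
    show ?thesis unfolding \<Phi>_def using P' by simp
  qed
  have en: "E (Suc (Suc k)) = E (Suc k)" for k
  proof -
    note P = coll_energy[where \<nu>="\<nu> (Suc (Suc k))" and V="U (Suc k)" and x="u (Suc k) + (T / m) *\<^sub>R F"
      and g=\<gamma> and r=r, OF gpos rpos nunu Unu]
    note Q = flight_energy[OF mpos, of "u (Suc k)" T F "a (Suc k)"]
    have s1: "a (Suc (Suc k)) = flight m F (a (Suc k)) (u (Suc k)) T" and
     s2: "u (Suc (Suc k)) = fst (collision \<gamma> r (\<nu> (Suc (Suc k))) (u (Suc k) + (T / m) *\<^sub>R F, U (Suc k)))" and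
     s3: "W (Suc (Suc k)) = snd (collision \<gamma> r (\<nu> (Suc (Suc k))) (u (Suc k) + (T / m) *\<^sub>R F, U (Suc k))) *v \<nu> (Suc (Suc k))" and
     s4: "U (Suc k) *v \<nu> (Suc (Suc k)) = - W (Suc k)" using stepdata[of k] by blast+
    note P' = P[folded s2 s3, unfolded s4]
    note Q' = Q[folded s1]
    have mm: "(- W (Suc k)) \<bullet> (- W (Suc k)) = W (Suc k) \<bullet> W (Suc k)" by simp
    show ?thesis unfolding E_def using P'[unfolded mm] Q' by linarith
  qed
  have phiC: "\<Phi> (Suc k) = \<Phi> 1" for k by (induction k) (use phi in auto)
  have enC: "E (Suc k) = E 1" for k by (induction k) (use en in auto)
  define nF where "nF = norm F"
  define K where "K = E 1 + (2/m) * (F \<bullet> \<Phi> 1)"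
  define R where "R = 1 + \<bar>K\<bar> + T/m * nF + T/(m*\<gamma>) * nF"
  have bnd: "norm (u (Suc k)) \<le> R \<and> \<gamma> * r * norm (W (Suc k)) \<le> R" for k
  proof -
    define j where "j = Suc k"
    have aj: "a j = \<Phi> 1 - (T/2) *\<^sub>R u j - (T^2/(4*m)) *\<^sub>R F + (T*r/2) *\<^sub>R W j"
      using phiC[of k] unfolding \<Phi>_def j_def by (simp add: algebra_simps)
    have "(norm (u j))^2 + (\<gamma> * r * norm (W j))^2 = E 1 + (2/m) * (F \<bullet> a j)"
      using enC[of k] unfolding E_def j_def by (simp add: power2_norm_eq_inner power_mult_distrib)
    also have "\<dots> = K - (T/m) * (F \<bullet> u j) - (T^2/(2*m^2)) * (F \<bullet> F) + (T*r/m) * (F \<bullet> W j)"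
    proof -
      have fa: "F \<bullet> a j = F \<bullet> \<Phi> 1 - (T/2) * (F \<bullet> u j) - (T^2/(4*m)) * (F \<bullet> F) + (T*r/2) * (F \<bullet> W j)"
        unfolding aj by (simp add: inner_diff_right inner_add_right)
      have gen: "E 1 + (2/m) * (p - (T/2) * q - (T^2/(4*m)) * z + (T*r/2) * w)
         = (E 1 + (2/m) * p) - (T/m) * q - (T^2/(2*m^2)) * z + (T*r/m) * w" for p q z w
        using mpos by (simp add: field_simps power2_eq_square)
      show ?thesis unfolding fa gen K_def ..
    qed
    also have "\<dots> \<le> K + (T/m * nF) * norm (u j) + (T/(m*\<gamma>) * nF) * (\<gamma> * r * norm (W j))"
    proof -
      have "- (F \<bullet> u j) \<le> nF * norm (u j)" unfolding nF_def
        using Cauchy_Schwarz_ineq2[of F "u j"] by linarith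
      then have 1: "- (T/m) * (F \<bullet> u j) \<le> (T/m * nF) * norm (u j)" using Tpos mpos
      proof -
        have "(T/m) * (- (F \<bullet> u j)) \<le> (T/m) * (nF * norm (u j))"
          using \<open>- (F \<bullet> u j) \<le> nF * norm (u j)\<close> by (intro mult_left_mono) (use Tpos mpos in auto)
        then show ?thesis by (simp add: algebra_simps)
      qed
      have "F \<bullet> W j \<le> nF * norm (W j)" unfolding nF_def
        using Cauchy_Schwarz_ineq2[of F "W j"] by linarith
      then have 2: "(T*r/m) * (F \<bullet> W j) \<le> (T*r/m) * (nF * norm (W j))" using Tpos mpos rpos
        by (intro mult_left_mono) auto
      have 3: "(T*r/m) * (nF * norm (W j)) = (T/(m*\<gamma>) * nF) * (\<gamma> * r * norm (W j))"
        using gpos by (simp add: field_simps)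
      have 4: "0 \<le> (T^2/(2*m^2)) * (F \<bullet> F)" by simp
      show ?thesis using 1 2 3 4 by linarith
    qed
    finally have "(norm (u j))^2 + (\<gamma> * r * norm (W j))^2 \<le> K + (T/m * nF) * norm (u j) + (T/(m*\<gamma>) * nF) * (\<gamma> * r * norm (W j))" .
    moreover have "0 \<le> \<gamma> * r * norm (W j)" "0 \<le> T/m * nF" "0 \<le> T/(m*\<gamma>) * nF"
      using Tpos mpos gpos rpos by (auto simp: nF_def)
    ultimately have "norm (u j) \<le> R \<and> \<gamma> * r * norm (W j) \<le> R"
      unfolding R_def using quad_bound[of "norm (u j)" "\<gamma> * r * norm (W j)" "T/m * nF" "T/(m*\<gamma>) * nF" K] by simp
    then show ?thesis unfolding j_def .
  qed
  define Ba where "Ba = norm (\<Phi> 1) + (T/2) * R + (T^2/(4*m)) * nF + (T/(2*\<gamma>)) * R"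
  have abnd: "norm (a (Suc k)) \<le> Ba" for k
  proof -
    have aj: "a (Suc k) = \<Phi> 1 - (T/2) *\<^sub>R u (Suc k) - (T^2/(4*m)) *\<^sub>R F + (T*r/2) *\<^sub>R W (Suc k)"
      using phiC[of k] unfolding \<Phi>_def by (simp add: algebra_simps)
    have "norm (a (Suc k)) \<le> norm (\<Phi> 1) + norm ((T/2) *\<^sub>R u (Suc k)) + norm ((T^2/(4*m)) *\<^sub>R F) + norm ((T*r/2) *\<^sub>R W (Suc k))"
    proof -
      have i1: "norm (\<Phi> 1 - (T/2) *\<^sub>R u (Suc k) - (T^2/(4*m)) *\<^sub>R F + (T*r/2) *\<^sub>R W (Suc k))
        \<le> norm (\<Phi> 1 - (T/2) *\<^sub>R u (Suc k) - (T^2/(4*m)) *\<^sub>R F) + norm ((T*r/2) *\<^sub>R W (Suc k))"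
        by (rule norm_triangle_ineq)
      have i2: "norm (\<Phi> 1 - (T/2) *\<^sub>R u (Suc k) - (T^2/(4*m)) *\<^sub>R F)
        \<le> norm (\<Phi> 1 - (T/2) *\<^sub>R u (Suc k)) + norm ((T^2/(4*m)) *\<^sub>R F)"
        by (rule norm_triangle_ineq4)
      have i3: "norm (\<Phi> 1 - (T/2) *\<^sub>R u (Suc k)) \<le> norm (\<Phi> 1) + norm ((T/2) *\<^sub>R u (Suc k))"
        by (rule norm_triangle_ineq4)
      show ?thesis unfolding aj using i1 i2 i3 by linarith
    qed
    also have "\<dots> = norm (\<Phi> 1) + (T/2) * norm (u (Suc k)) + (T^2/(4*m)) * nF + (T/(2*\<gamma>)) * (\<gamma> * r * norm (W (Suc k)))"
    proof -
      have "norm ((T/2) *\<^sub>R u (Suc k)) = (T/2) * norm (u (Suc k))" using Tpos by simp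
      moreover have "norm ((T^2/(4*m)) *\<^sub>R F) = (T^2/(4*m)) * nF" using mpos by (simp add: nF_def)
      moreover have "norm ((T*r/2) *\<^sub>R W (Suc k)) = (T/(2*\<gamma>)) * (\<gamma> * r * norm (W (Suc k)))"
        using Tpos rpos gpos by simp
      ultimately show ?thesis by simp
    qed
    also have "\<dots> \<le> Ba" unfolding Ba_def using bnd[of k] Tpos gpos
      by (intro add_mono mult_left_mono order_refl) auto
    finally show ?thesis .
  qed
  define B where "B = max (norm (a 0) + D 0 * norm (u 0) + (D 0)^2/(2*m) * nF) (Ba + T * R + T^2/(2*m) * nF)"
  show ?thesis unfolding bounded_iff
  proof (intro exI ballI)
    fix x assume "x \<in> {flight m F (a k) (u k) \<tau> | k \<tau>. 0 \<le> \<tau> \<and> \<tau> \<le> t (Suc k) - t k}"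
    then obtain k \<tau> where x: "x = flight m F (a k) (u k) \<tau>" and t1: "0 \<le> \<tau>" and t2: "\<tau> \<le> D k"
      unfolding D_def by blast
    show "norm x \<le> B"
    proof (cases k)
      case 0
      then show ?thesis using flight_norm[OF mpos t1 t2, of F "a k" "u k"] x unfolding B_def nF_def by simp
    next
      case (Suc k')
      have "D k = T" using geo[of k'] Suc by simp
      then have "norm x \<le> norm (a k) + T * norm (u k) + T^2/(2*m) * nF"
        using flight_norm[OF mpos t1 t2, of F "a k" "u k"] x unfolding nF_def by simp
      also have "\<dots> \<le> Ba + T * R + T^2/(2*m) * nF"
        using abnd[of k'] bnd[of k'] Suc Tpos by (intro add_mono mult_left_mono order_refl) auto
      finally show ?thesis unfolding B_def by simp
    qed
  qed
qed

end
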